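(* Let $k,n$ be integers with $2\le k\le n$. Then $d^E_2(n,k)\le \max\{d^E_2(n-1,k-1),\,d^E_2(n-2,k-2)\}$.
   Context: For $k\le n$, $d^E_2(n,k)$ denotes the largest minimum distance among all binary Euclidean LCD $[n,k]$ codes, i.e. $k$-dimensional subspaces $C\subseteq\mathbb{F}_2^n$ with $C\cap C^{\perp_E}=\{0\}$, where $C^{\perp_E}$ is the dual with respect to $\langle x,y\rangle_E=\sum x_iy_i$. *)

theory Defs
  imports Main "HOL-Library.Z2" "HOL-Library.Function_Algebras" "HOL-Library.Extended_Nat"
begin

text \<open>Vectors of F_2^n are modelled as functions nat => bit vanishing outside {0..<n}.\<close>

definition vecs :: "nat \<Rightarrow> (nat \<Rightarrow> bit) set" where
  "vecs n = {x. \<forall>i. n \<le> i \<longrightarrow> x i = 0}"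

definition bscale :: "bit \<Rightarrow> (nat \<Rightarrow> bit) \<Rightarrow> (nat \<Rightarrow> bit)" where
  "bscale c x = (\<lambda>i. c * x i)"

definition einner :: "nat \<Rightarrow> (nat \<Rightarrow> bit) \<Rightarrow> (nat \<Rightarrow> bit) \<Rightarrow> bit" where
  "einner n x y = (\<Sum>i<n. x i * y i)"

definition edual :: "nat \<Rightarrow> (nat \<Rightarrow> bit) set \<Rightarrow> (nat \<Rightarrow> bit) set" where
  "edual n C = {y \<in> vecs n. \<forall>x\<in>C. einner n x y = 0}"

definition binary_linear_code :: "nat \<Rightarrow> nat \<Rightarrow> (nat \<Rightarrow> bit) set \<Rightarrow> bool" where
  "binary_linear_code n k C \<longleftrightarrow> C \<subseteq> vecs n \<and> module.subspace bscale C
      \<and> vector_space.dim bscale C = k"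

definition LCD_code :: "nat \<Rightarrow> nat \<Rightarrow> (nat \<Rightarrow> bit) set \<Rightarrow> bool" where
  "LCD_code n k C \<longleftrightarrow> binary_linear_code n k C \<and> C \<inter> edual n C = {0}"

definition hdist :: "nat \<Rightarrow> (nat \<Rightarrow> bit) \<Rightarrow> (nat \<Rightarrow> bit) \<Rightarrow> nat" where
  "hdist n x y = card {i. i < n \<and> x i \<noteq> y i}"

text \<open>Minimum distance; the zero code gets minimum distance infinity (Inf of the empty set).\<close>
definition min_dist :: "nat \<Rightarrow> (nat \<Rightarrow> bit) set \<Rightarrow> enat" where
  "min_dist n C = (INF p \<in> {(x, y). x \<in> C \<and> y \<in> C \<and> x \<noteq> y}. enat (hdist n (fst p) (snd p)))"

definition dE2 :: "nat \<Rightarrow> nat \<Rightarrow> enat" where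
  "dE2 n k = (SUP C \<in> {C. LCD_code n k C}. min_dist n C)"

end

theory Submission
  imports Defs
begin

lemma bit_add_self[simp]: "(x::bit) + x = 0"
  by (cases x) simp_all

lemma fun_add_self[simp]: "(x::nat \<Rightarrow> bit) + x = 0"
  by (rule ext) simp

interpretation V: vector_space bscale
  by unfold_locales (auto simp: bscale_def fun_eq_iff algebra_simps)

lemma bscale_0[simp]: "bscale 0 x = 0" and bscale_1[simp]: "bscale 1 x = x"
  by (auto simp: bscale_def fun_eq_iff)

lemma bscale_cases: "bscale c x = 0 \<or> bscale c x = x"
  by (cases c) auto

lemma subspace_iff: "V.subspace S \<longleftrightarrow> 0 \<in> S \<and> (\<forall>x\<in>S. \<forall>y\<in>S. x + y \<in> S)"
  unfolding V.subspace_def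
proof safe
  fix c x assume "0 \<in> S" "x \<in> S" 
  then show "bscale c x \<in> S" using bscale_cases[of c x] by metis
qed

lemma einner_add: "einner n (x + y) z = einner n x z + einner n y z"
  unfolding einner_def plus_fun_def by (simp only: distrib_right sum.distrib)
lemma einner_sym: "einner n x y = einner n y x"
  unfolding einner_def by (simp only: mult.commute)
lemma einner_scale: "einner n (bscale c x) z = c * einner n x z"
  unfolding einner_def bscale_def by (simp only: sum_distrib_left mult.assoc)

definition nondeg :: "nat \<Rightarrow> (nat \<Rightarrow> bit) set \<Rightarrow> bool" where
  "nondeg n S \<longleftrightarrow> (\<forall>x\<in>S. x \<noteq> 0 \<longrightarrow> (\<exists>y\<in>S. einner n x y = 1))"

lemma LCD_iff: "LCD_code n k C \<longleftrightarrow> binary_linear_code n k C \<and> nondeg n C"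
proof -
  have "C \<inter> edual n C = {0} \<longleftrightarrow> nondeg n C" if "C \<subseteq> vecs n" "0 \<in> C"
  proof
    assume a: "C \<inter> edual n C = {0}"
    show "nondeg n C" unfolding nondeg_def
    proof (intro ballI impI, rule ccontr)
      fix x assume x: "x \<in> C" "x \<noteq> 0" "\<not> (\<exists>y\<in>C. einner n x y = 1)"
      then have "x \<in> edual n C" using that unfolding edual_def
        by (auto simp: einner_sym)
      with a x show False by blast
    qed
  next
    assume a: "nondeg n C"
    show "C \<inter> edual n C = {0}"
    proof
      show "{0} \<subseteq> C \<inter> edual n C" using that by (auto simp: edual_def einner_def vecs_def)
      show "C \<inter> edual n C \<subseteq> {0}"
      proof
        fix x assume "x \<in> C \<inter> edual n C"
        then show "x \<in> {0}" using a unfolding nondeg_def edual_def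
          by (force simp: einner_sym)
      qed
    qed
  qed
  then show ?thesis unfolding LCD_code_def binary_linear_code_def subspace_iff by blast
qed

lemma fun_minus_bit: "(x::nat \<Rightarrow> bit) - y = x + y"
  by (rule ext) (simp add: fun_diff_def)

lemma dim_insert':
  assumes fin: "finite S" and x: "x \<notin> V.span S"
  shows "V.dim (insert x S) = V.dim S + 1"
proof -
  obtain B where B: "B \<subseteq> S" "V.independent B" "S \<subseteq> V.span B" "card B = V.dim S"
    using V.basis_exists[of S] by blast
  have finB: "finite B" using fin B(1) finite_subset by blast
  have spB: "V.span B = V.span S"
    using B(1,3) V.span_mono[of B S] V.span_mono[of S "V.span B"] V.span_span[of B] by auto
  have xB: "x \<notin> V.span B" using x spB by simp
  have ind: "V.independent (insert x B)" using V.independent_insertI[OF xB B(2)] .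
  have "V.span (insert x B) = V.span (insert x S)" unfolding V.span_insert spB ..
  then have "V.dim (insert x S) = card (insert x B)" using V.dim_eq_card[OF _ ind] by simp
  also have "\<dots> = card B + 1" using finB xB V.span_base[of x B] by (subst card_insert_disjoint) auto
  finally show ?thesis using B(4) by simp
qed

lemma finite_vecs: "finite (vecs n)"
proof -
  have "vecs n \<subseteq> {f. \<forall>x. (x \<in> {..<n} \<longrightarrow> f x \<in> (UNIV::bit set)) \<and> (x \<notin> {..<n} \<longrightarrow> f x = 0)}"
    unfolding vecs_def by auto
  moreover have "finite (UNIV::bit set)"
  proof -
    have "(UNIV::bit set) = {0, 1}" by (auto intro: bit.exhaust)
    then show ?thesis by (metis finite.emptyI finite_insert)
  qed
  ultimately show ?thesis using finite_subset finite_set_of_finite_funs[of "{..<n}" "UNIV::bit set" 0] by blast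
qed

lemma dim_drop1:
  assumes C: "V.subspace C" and fin: "finite C" and c0: "c0 \<in> C" "c0 j = 1"
  shows "V.dim C = V.dim {c\<in>C. c j = 0} + 1"
proof -
  let ?D = "{c\<in>C. c j = 0}"
  have sD: "V.subspace ?D" using C by (auto simp: subspace_iff)
  have finD: "finite ?D" using fin finite_subset by auto
  have "V.span (insert c0 ?D) = C"
  proof
    show "V.span (insert c0 ?D) \<subseteq> C" using V.span_minimal[of "insert c0 ?D" C] C c0 by auto
    show "C \<subseteq> V.span (insert c0 ?D)"
    proof
      fix x assume x: "x \<in> C"
      show "x \<in> V.span (insert c0 ?D)"
      proof (cases "x j = 0")
        case True then show ?thesis using x by (auto intro: V.span_base)
      next
        case False
        then have "x + c0 \<in> ?D" using x c0 C by (auto simp: subspace_iff)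
        then have "(x + c0) + c0 \<in> V.span (insert c0 ?D)" by (intro V.span_add V.span_base) auto
        moreover have "(x + c0) + c0 = x" by (simp add: add.assoc)
        ultimately show ?thesis by simp
      qed
    qed
  qed
  then have "V.dim C = V.dim (insert c0 ?D)" using V.dim_span[of "insert c0 ?D"] by (simp only:)
  also have "\<dots> = V.dim ?D + 1"
    using dim_insert'[of ?D c0] sD c0 finD by (simp add: V.span_eq_iff[THEN iffD2, OF sD])
  finally show ?thesis .
qed

lemma degenerate_rep:
  assumes C: "V.subspace C" and nd: "nondeg n C" and c0: "c0 \<in> C" "c0 j = 1"
    and dg: "\<not> nondeg n {c\<in>C. c j = 0}"
  shows "\<exists>u\<in>C. u j = 0 \<and> (\<forall>c\<in>C. einner n u c = c j)"
proof -
  from dg obtain x where x0: "x \<in> {c\<in>C. c j = 0}" "x \<noteq> 0"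
    and orth0: "\<forall>y\<in>{c\<in>C. c j = 0}. einner n x y \<noteq> 1"
    unfolding nondeg_def by blast
  then have x: "x \<in> C" "x j = 0" "x \<noteq> 0" by auto
  have orth: "einner n x y = 0" if "y \<in> C" "y j = 0" for y
    using orth0 that by simp
  have eq: "einner n x c = einner n x c0" if "c \<in> C" "c j = 1" for c
  proof -
    have "c + c0 \<in> C" using that c0 C by (auto simp: subspace_iff)
    moreover have "(c + c0) j = 0" using that c0 by simp
    ultimately have "einner n x (c + c0) = 0" using orth by blast
    then have "einner n x c + einner n x c0 = 0" by (simp add: einner_sym[of n x] einner_add)
    then show ?thesis by (cases "einner n x c"; cases "einner n x c0") auto
  qed
  from nd x obtain y where y: "y \<in> C" "einner n x y = 1" unfolding nondeg_def by auto
  then have "y j = 1" using orth by (metis bit_not_zero_iff zero_neq_one)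
  then have x1: "einner n x c0 = 1" using eq y by metis
  have "\<forall>c\<in>C. einner n x c = c j"
  proof
    fix c assume "c \<in> C"
    then show "einner n x c = c j" using eq[of c] x1 orth[of c] by (cases "c j") auto
  qed
  then show ?thesis using x by blast
qed

lemma drop2:
  assumes C: "V.subspace C" and fin: "finite C" and nd: "nondeg n C"
    and u1: "u1 \<in> C" "u1 j1 = 0" "u1 j2 = 1" "\<forall>c\<in>C. einner n u1 c = c j1"
    and u2: "u2 \<in> C" "u2 j2 = 0" "u2 j1 = 1" "\<forall>c\<in>C. einner n u2 c = c j2"
  shows "nondeg n {c\<in>C. c j1 = 0 \<and> c j2 = 0}"
    and "V.dim C = V.dim {c\<in>C. c j1 = 0 \<and> c j2 = 0} + 2"
proof -
  let ?D = "{c\<in>C. c j1 = 0 \<and> c j2 = 0}"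
  have sD: "V.subspace ?D" using C by (auto simp: subspace_iff)
  have finD1: "finite ?D" by (rule finite_subset[OF _ fin]) blast
  have finD: "finite ?D" "finite (insert u2 ?D)" using finD1 by simp_all
  define pr where "pr c = c + bscale (c j2) u1 + bscale (c j1) u2" for c
  have prD: "pr c \<in> ?D" if "c \<in> C" for c
  proof -
    have s1: "bscale (c j2) u1 \<in> C" using V.subspace_scale[OF C u1(1)] .
    have s2: "bscale (c j1) u2 \<in> C" using V.subspace_scale[OF C u2(1)] .
    have "pr c \<in> C" unfolding pr_def
      by (rule V.subspace_add[OF C], rule V.subspace_add[OF C]) (rule that, rule s1, rule s2)
    moreover have "pr c j1 = 0" "pr c j2 = 0"
      unfolding pr_def bscale_def plus_fun_apply by (simp_all only: u1(2,3) u2(2,3)) simp_all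
    ultimately show ?thesis by blast
  qed
  have prback: "c = pr c + bscale (c j2) u1 + bscale (c j1) u2" for c
  proof (rule ext)
    fix i
    show "c i = (pr c + bscale (c j2) u1 + bscale (c j1) u2) i"
      unfolding pr_def bscale_def plus_fun_apply
      by (cases "c i"; cases "c j1"; cases "c j2"; cases "u1 i"; cases "u2 i") simp_all
  qed
  show "nondeg n ?D" unfolding nondeg_def
  proof (intro ballI impI, rule ccontr)
    fix x assume x: "x \<in> ?D" "x \<noteq> 0" and no: "\<not> (\<exists>y\<in>?D. einner n x y = 1)"
    have "x \<in> C" using x by blast
    with nd x(2) obtain y where y: "y \<in> C" "einner n x y = 1" unfolding nondeg_def by blast
    have z1: "einner n x (pr y) \<noteq> 1" using no prD[OF y(1)] by blast
    then have z1: "einner n x (pr y) = 0" by simp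
    have z2: "einner n u1 x = 0" "einner n u2 x = 0" using u1(4) u2(4) x(1) by auto
    have e: "pr y + bscale (y j2) u1 + bscale (y j1) u2 = y" by (rule prback[symmetric])
    have "einner n (pr y + bscale (y j2) u1 + bscale (y j1) u2) x =
      einner n (pr y) x + y j2 * einner n u1 x + y j1 * einner n u2 x"
      by (simp only: einner_add einner_scale)
    also have "\<dots> = 0" using z1 z2 by (simp add: einner_sym[of n x])
    finally have "einner n y x = 0" unfolding e .
    then have "einner n x y = 0" by (simp add: einner_sym)
    with y show False by simp
  qed
  have "V.span (insert u1 (insert u2 ?D)) = C"
  proof
    show "V.span (insert u1 (insert u2 ?D)) \<subseteq> C"
      using V.span_minimal[of "insert u1 (insert u2 ?D)" C] C u1(1) u2(1) by blast
    show "C \<subseteq> V.span (insert u1 (insert u2 ?D))"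
    proof
      fix c assume c: "c \<in> C"
      have "pr c + bscale (c j2) u1 + bscale (c j1) u2 \<in> V.span (insert u1 (insert u2 ?D))"
        using prD[OF c] by (intro V.span_add V.span_scale V.span_base) (auto simp del: bscale_0 bscale_1)
      moreover have "pr c + bscale (c j2) u1 + bscale (c j1) u2 = c" by (rule prback[symmetric])
      ultimately show "c \<in> V.span (insert u1 (insert u2 ?D))" by simp
    qed
  qed
  then have d0: "V.dim C = V.dim (insert u1 (insert u2 ?D))"
    using V.dim_span[of "insert u1 (insert u2 ?D)"] by (simp only:)
  have spD: "V.span ?D = ?D" using V.span_eq_iff[THEN iffD2, OF sD] .
  have "u2 \<notin> V.span ?D" unfolding spD using u2 by simp
  then have d1: "V.dim (insert u2 ?D) = V.dim ?D + 1" by (rule dim_insert'[OF finD(1)])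
  have "u1 \<notin> V.span (insert u2 ?D)"
  proof
    assume "u1 \<in> V.span (insert u2 ?D)"
    then obtain k where "u1 - bscale k u2 \<in> ?D" unfolding V.span_insert spD by blast
    then have "(u1 - bscale k u2) j2 = 0" by blast
    then show False using u1(3) u2(2) by (simp add: fun_minus_bit bscale_def)
  qed
  then have d2: "V.dim (insert u1 (insert u2 ?D)) = V.dim (insert u2 ?D) + 1" by (rule dim_insert'[OF finD(2)])
  from d0 d1 d2 show "V.dim C = V.dim ?D + 2" by simp
qed

definition sw :: "nat \<Rightarrow> nat \<Rightarrow> nat \<Rightarrow> nat" where
  "sw a b i = (if i = a then b else if i = b then a else i)"

lemma sw_sw[simp]: "sw a b (sw a b i) = i"
  by (simp add: sw_def)

lemma sw_lt: "a < n \<Longrightarrow> b < n \<Longrightarrow> sw a b i < n \<longleftrightarrow> i < n"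
  by (auto simp: sw_def)

lemma sw_image: assumes "a < n" "b < n" shows "sw a b ` {..<n} = {..<n}"
proof
  show "sw a b ` {..<n} \<subseteq> {..<n}" using sw_lt[OF assms] by auto
  show "{..<n} \<subseteq> sw a b ` {..<n}"
  proof
    fix i assume "i \<in> {..<n}"
    then have "sw a b i \<in> {..<n}" using sw_lt[OF assms] by auto
    then show "i \<in> sw a b ` {..<n}" using sw_sw[of a b i] by (metis image_eqI)
  qed
qed

lemma sw_inj: "inj (sw a b)"
  by (metis injI sw_sw)

lemma sum_sw: assumes "a < n" "b < n"
  shows "(\<Sum>i<n. f (sw a b i)) = (\<Sum>i<n. (f i :: 'x::comm_monoid_add))"
proof -
  have "(\<Sum>i\<in>sw a b ` {..<n}. f i) = (\<Sum>i<n. f (sw a b i))"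
    using sum.reindex[OF inj_on_subset[OF sw_inj subset_UNIV[of "{..<n}"]], of f] by (simp add: comp_def)
  then show ?thesis using sw_image[OF assms] by simp
qed

lemma card_sw: assumes "a < n" "b < n"
  shows "card {i. i < n \<and> P (sw a b i)} = card {i. i < n \<and> P i}"
proof -
  have "sw a b ` {i. i < n \<and> P (sw a b i)} = {i. i < n \<and> P i}"
  proof
    show "sw a b ` {i. i < n \<and> P (sw a b i)} \<subseteq> {i. i < n \<and> P i}" using sw_lt[OF assms] by auto
    show "{i. i < n \<and> P i} \<subseteq> sw a b ` {i. i < n \<and> P (sw a b i)}"
    proof
      fix i assume i: "i \<in> {i. i < n \<and> P i}"
      then have "sw a b i \<in> {i. i < n \<and> P (sw a b i)}" using sw_lt[OF assms] by auto
      then show "i \<in> sw a b ` {i. i < n \<and> P (sw a b i)}" using sw_sw[of a b i] by (metis image_eqI)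
    qed
  qed
  moreover have "card (sw a b ` {i. i < n \<and> P (sw a b i)}) = card {i. i < n \<and> P (sw a b i)}"
    by (rule card_image[OF inj_on_subset[OF sw_inj]]) auto
  ultimately show ?thesis by simp
qed

lemma shorten:
  assumes Dv: "D \<subseteq> vecs n" and sD: "V.subspace D" and nd: "nondeg n D" and fin: "finite D"
    and j: "j < n" and z: "\<forall>c\<in>D. c j = 0"
  shows "\<exists>D'. D' \<subseteq> vecs (n - 1) \<and> V.subspace D' \<and> nondeg (n - 1) D' \<and> finite D'
     \<and> V.dim D' = V.dim D \<and> min_dist n D \<le> min_dist (n - 1) D'
     \<and> (\<forall>j'. j' < n \<and> j' \<noteq> j \<and> (\<forall>c\<in>D. c j' = 0) \<longrightarrow> (\<exists>j''<n - 1. \<forall>c\<in>D'. c j'' = 0))"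
proof -
  define m where "m = n - 1"
  have nm: "n = Suc m" using j m_def by simp
  have mn: "m < n" using nm by simp
  define T where "T x = (\<lambda>i. x (sw j m i))" for x :: "nat \<Rightarrow> bit"
  have Tadd: "T (x + y) = T x + T y" for x y by (simp add: T_def fun_eq_iff)
  have T0: "T 0 = 0" by (simp add: T_def fun_eq_iff)
  have Tscale: "T (bscale c x) = bscale c (T x)" for c x by (simp add: T_def bscale_def fun_eq_iff)
  have Tinj: "inj T"
  proof (rule injI)
    fix x y assume "T x = T y"
    then have "T x (sw j m i) = T y (sw j m i)" for i by simp
    then show "x = y" by (simp add: T_def fun_eq_iff)
  qed
  have Tm: "T x m = x j" for x by (simp add: T_def sw_def)
  have Tv: "T x \<in> vecs m" if "x \<in> D" for x
    unfolding vecs_def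
  proof (intro CollectI allI impI)
    fix i assume "m \<le> i"
    show "T x i = 0"
    proof (cases "i = m")
      case True then show ?thesis using Tm z that by simp
    next
      case False
      then have "sw j m i = i" "n \<le> i" using \<open>m \<le> i\<close> j nm by (auto simp: sw_def)
      then show ?thesis using Dv that unfolding T_def vecs_def by auto
    qed
  qed
  have Tein: "einner m (T x) (T y) = einner n x y" if "x \<in> D" for x y
  proof -
    have "einner n x y = (\<Sum>i<n. (\<lambda>i. x i * y i) (sw j m i))"
      unfolding einner_def by (rule sum_sw[OF j mn, symmetric])
    also have "\<dots> = (\<Sum>i<m. T x i * T y i) + T x m * T y m"
      unfolding nm T_def by simp
    also have "\<dots> = einner m (T x) (T y)" using Tm z that by (simp add: einner_def)
    finally show ?thesis by simp
  qed
  have Thd: "hdist m (T x) (T y) = hdist n x y" if "x \<in> D" "y \<in> D" for x y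
  proof -
    have "x j = 0" "y j = 0" using z that by auto
    then have "{i. i < n \<and> T x i \<noteq> T y i} = {i. i < m \<and> T x i \<noteq> T y i}"
      using Tm nm by (auto simp: less_Suc_eq)
    moreover have "card {i. i < n \<and> T x i \<noteq> T y i} = card {i. i < n \<and> x i \<noteq> y i}"
      unfolding T_def by (rule card_sw[OF j mn, of "\<lambda>i. x i \<noteq> y i"])
    ultimately show ?thesis unfolding hdist_def by simp
  qed
  define D' where "D' = T ` D"
  have "D' \<subseteq> vecs m" using Tv D'_def by auto
  moreover have sD': "V.subspace D'" unfolding subspace_iff
  proof
    show "0 \<in> D'" using T0 sD unfolding D'_def subspace_iff by (metis image_eqI)
    show "\<forall>x\<in>D'. \<forall>y\<in>D'. x + y \<in> D'"
    proof (intro ballI)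
      fix x' y' assume "x' \<in> D'" "y' \<in> D'"
      then obtain x y where "x \<in> D" "y \<in> D" "x' = T x" "y' = T y" unfolding D'_def by blast
      then have "x + y \<in> D" "x' + y' = T (x + y)" using sD Tadd unfolding subspace_iff by auto
      then show "x' + y' \<in> D'" unfolding D'_def by blast
    qed
  qed
  moreover have "nondeg m D'" unfolding nondeg_def
  proof (intro ballI impI)
    fix x' assume "x' \<in> D'" "x' \<noteq> 0"
    then obtain x where x: "x \<in> D" "x' = T x" unfolding D'_def by blast
    then have "x \<noteq> 0" using T0 \<open>x' \<noteq> 0\<close> by auto
    then obtain y where "y \<in> D" "einner n x y = 1" using nd x unfolding nondeg_def by blast
    then show "\<exists>y\<in>D'. einner m x' y = 1" using Tein x unfolding D'_def by auto
  qed
  moreover have "finite D'" using fin D'_def by simp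
  moreover have "V.dim D' = V.dim D"
  proof -
    obtain B where B: "B \<subseteq> D" "V.independent B" "D \<subseteq> V.span B" "card B = V.dim D"
      using V.basis_exists[of D] by blast
    have spB: "V.span B = D"
      using B(1,3) V.span_minimal[OF B(1) sD] by auto
    interpret H: module_hom bscale bscale T
      by (unfold_locales) (simp_all add: Tadd Tscale)
    have indT: "V.independent (T ` B)"
      using H.independent_injective_image[OF B(2)] inj_on_subset[OF Tinj] by blast
    have "V.span (T ` B) = T ` V.span B" by (rule H.span_image)
    also have "\<dots> = D'" using spB D'_def by simp
    also have "\<dots> = V.span D'" by (rule sym[OF V.span_eq_iff[THEN iffD2, OF sD']])
    finally have "V.dim D' = card (T ` B)" using V.dim_eq_card[OF _ indT] by simp
    also have "\<dots> = card B" using card_image[OF inj_on_subset[OF Tinj]] by blast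
    finally show ?thesis using B(4) by simp
  qed
  moreover have "min_dist n D \<le> min_dist m D'"
    unfolding min_dist_def
  proof (rule INF_greatest)
    fix p assume "p \<in> {(x, y). x \<in> D' \<and> y \<in> D' \<and> x \<noteq> y}"
    then obtain x y where xy: "x \<in> D" "y \<in> D" "T x \<noteq> T y" "p = (T x, T y)" unfolding D'_def by auto
    then have "(x, y) \<in> {(x, y). x \<in> D \<and> y \<in> D \<and> x \<noteq> y}" by auto
    then have "(INF p \<in> {(x, y). x \<in> D \<and> y \<in> D \<and> x \<noteq> y}. enat (hdist n (fst p) (snd p)))
        \<le> enat (hdist n x y)" by (rule INF_lower2) simp
    then show "(INF p \<in> {(x, y). x \<in> D \<and> y \<in> D \<and> x \<noteq> y}. enat (hdist n (fst p) (snd p)))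
        \<le> enat (hdist m (fst p) (snd p))" using Thd[OF xy(1,2)] xy(4) by simp
  qed
  moreover have "\<forall>j'. j' < n \<and> j' \<noteq> j \<and> (\<forall>c\<in>D. c j' = 0) \<longrightarrow> (\<exists>j''<m. \<forall>c\<in>D'. c j'' = 0)"
  proof (intro allI impI)
    fix j' assume a: "j' < n \<and> j' \<noteq> j \<and> (\<forall>c\<in>D. c j' = 0)"
    have "sw j m j' < n" using sw_lt[OF j mn] a by blast
    moreover have "sw j m j' \<noteq> m" using a by (auto simp: sw_def)
    ultimately have lt: "sw j m j' < m" using nm by simp
    have "\<forall>c\<in>D'. c (sw j m j') = 0" using a unfolding D'_def T_def by auto
    then show "\<exists>j''<m. \<forall>c\<in>D'. c j'' = 0" using lt by blast
  qed
  ultimately show ?thesis unfolding m_def by blast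
qed

lemma min_dist_mono: "D \<subseteq> C \<Longrightarrow> min_dist n C \<le> min_dist n D"
  unfolding min_dist_def by (rule INF_superset_mono) auto

lemma einner_zero[simp]: "einner n 0 c = 0"
  by (simp add: einner_def)

lemma key:
  assumes Cv: "C \<subseteq> vecs n" and sC: "V.subspace C" and nd: "nondeg n C" and dk: "V.dim C \<ge> 1"
  shows "(\<exists>j<n. nondeg n {c\<in>C. c j = 0} \<and> V.dim C = V.dim {c\<in>C. c j = 0} + 1)
    \<or> (\<exists>j1<n. \<exists>j2<n. j1 \<noteq> j2 \<and> nondeg n {c\<in>C. c j1 = 0 \<and> c j2 = 0}
         \<and> V.dim C = V.dim {c\<in>C. c j1 = 0 \<and> c j2 = 0} + 2)"
proof -
  have finC: "finite C" using finite_subset[OF Cv finite_vecs] .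
  have "\<not> C \<subseteq> {0}"
  proof
    assume "C \<subseteq> {0}"
    then have "C \<subseteq> V.span {}" using V.span_empty by simp
    then have "V.dim C \<le> card ({} :: (nat \<Rightarrow> bit) set)" by (rule V.dim_le_card) simp
    with dk show False by simp
  qed
  then obtain c where c: "c \<in> C" "c \<noteq> 0" by blast
  then obtain j1 where "c j1 \<noteq> 0" by (auto simp: fun_eq_iff)
  then have cj1: "c j1 = 1" by simp
  have inv: "i < n" if "x \<in> C" "x i = 1" for x i
  proof (rule ccontr)
    assume "\<not> i < n"
    then have "x i = 0" using that(1) Cv unfolding vecs_def by auto
    with that(2) show False by simp
  qed
  have j1n: "j1 < n" using inv[OF c(1) cj1] .
  show ?thesis
  proof (cases "\<exists>j<n. (\<exists>c\<in>C. c j = 1) \<and> nondeg n {c\<in>C. c j = 0}")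
    case True
    then obtain j c0 where "j < n" "c0 \<in> C" "c0 j = 1" "nondeg n {c\<in>C. c j = 0}" by blast
    then show ?thesis using dim_drop1[OF sC finC, of c0 j] by blast
  next
    case False
    have rep: "\<exists>u\<in>C. u j = 0 \<and> (\<forall>c\<in>C. einner n u c = c j)" if "c0 \<in> C" "c0 j = 1" for j c0
    proof -
      have "j < n" using inv that by blast
      then have "\<not> nondeg n {c\<in>C. c j = 0}" using False that by blast
      then show ?thesis using degenerate_rep[OF sC nd that] by blast
    qed
    obtain u1 where u1: "u1 \<in> C" "u1 j1 = 0" "\<forall>c\<in>C. einner n u1 c = c j1"
      using rep[OF c(1) cj1] by blast
    have "u1 \<noteq> 0"
    proof
      assume "u1 = 0"
      then have "einner n u1 c = 0" by simp
      moreover have "einner n u1 c = 1" using u1(3) c(1) cj1 by simp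
      ultimately show False by simp
    qed
    then obtain j2 where "u1 j2 \<noteq> 0" by (auto simp: fun_eq_iff)
    then have u1j2: "u1 j2 = 1" by simp
    have j2n: "j2 < n" using inv[OF u1(1) u1j2] .
    obtain u2 where u2: "u2 \<in> C" "u2 j2 = 0" "\<forall>c\<in>C. einner n u2 c = c j2"
      using rep[OF u1(1) u1j2] by blast
    have "u2 j1 = einner n u1 u2" using u1(3) u2(1) by simp
    also have "\<dots> = einner n u2 u1" by (rule einner_sym)
    also have "\<dots> = 1" using u2(3) u1(1) u1j2 by simp
    finally have u2j1: "u2 j1 = 1" .
    have ne: "j1 \<noteq> j2" using u1(2) u1j2 by auto
    show ?thesis
      using drop2[OF sC finC nd u1(1,2) u1j2 u1(3) u2(1,2) u2j1 u2(3)] j1n j2n ne by blast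
  qed
qed

theorem corollary4p4:
  fixes n k :: nat
  assumes "2 \<le> k" and "k \<le> n"
  shows "dE2 n k \<le> max (dE2 (n - 1) (k - 1)) (dE2 (n - 2) (k - 2))"
  unfolding dE2_def[of n k]
proof (rule SUP_least)
  fix C assume "C \<in> {C. LCD_code n k C}"
  then have L: "binary_linear_code n k C" "nondeg n C" using LCD_iff by auto
  then have Cv: "C \<subseteq> vecs n" and sC: "V.subspace C" and dC: "V.dim C = k"
    unfolding binary_linear_code_def by auto
  have finC: "finite C" using finite_subset[OF Cv finite_vecs] .
  have dk: "V.dim C \<ge> 1" using dC assms by simp
  from key[OF Cv sC L(2) dk] show "min_dist n C \<le> max (dE2 (n - 1) (k - 1)) (dE2 (n - 2) (k - 2))"
  proof
    assume "\<exists>j<n. nondeg n {c\<in>C. c j = 0} \<and> V.dim C = V.dim {c\<in>C. c j = 0} + 1"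
    then obtain j where j: "j < n" "nondeg n {c\<in>C. c j = 0}" "V.dim C = V.dim {c\<in>C. c j = 0} + 1"
      by blast
    let ?D = "{c\<in>C. c j = 0}"
    have Dv: "?D \<subseteq> vecs n" using Cv by auto
    have sD: "V.subspace ?D" using sC by (auto simp: subspace_iff)
    have finD: "finite ?D" using finC by simp
    obtain D' where D': "D' \<subseteq> vecs (n - 1)" "V.subspace D'" "nondeg (n - 1) D'"
        "V.dim D' = V.dim ?D" "min_dist n ?D \<le> min_dist (n - 1) D'"
      using shorten[OF Dv sD j(2) finD j(1)] by auto
    have "LCD_code (n - 1) (k - 1) D'"
      unfolding LCD_iff binary_linear_code_def using D' j(3) dC by simp
    then have "min_dist (n - 1) D' \<le> dE2 (n - 1) (k - 1)"
      unfolding dE2_def by (rule SUP_upper[OF CollectI])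
    moreover have "min_dist n C \<le> min_dist n ?D" by (rule min_dist_mono) auto
    ultimately have "min_dist n C \<le> dE2 (n - 1) (k - 1)" using D'(5) by (meson order_trans)
    then show ?thesis by (simp add: le_max_iff_disj)
  next
    assume "\<exists>j1<n. \<exists>j2<n. j1 \<noteq> j2 \<and> nondeg n {c\<in>C. c j1 = 0 \<and> c j2 = 0}
         \<and> V.dim C = V.dim {c\<in>C. c j1 = 0 \<and> c j2 = 0} + 2"
    then obtain j1 j2 where j: "j1 < n" "j2 < n" "j1 \<noteq> j2" "nondeg n {c\<in>C. c j1 = 0 \<and> c j2 = 0}"
         "V.dim C = V.dim {c\<in>C. c j1 = 0 \<and> c j2 = 0} + 2" by blast
    let ?D = "{c\<in>C. c j1 = 0 \<and> c j2 = 0}"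
    have Dv: "?D \<subseteq> vecs n" using Cv by auto
    have sD: "V.subspace ?D" using sC by (auto simp: subspace_iff)
    have finD: "finite ?D" using finC by simp
    obtain D1 where D1: "D1 \<subseteq> vecs (n - 1)" "V.subspace D1" "nondeg (n - 1) D1" "finite D1"
        "V.dim D1 = V.dim ?D" "min_dist n ?D \<le> min_dist (n - 1) D1"
        "\<forall>j'. j' < n \<and> j' \<noteq> j2 \<and> (\<forall>c\<in>?D. c j' = 0) \<longrightarrow> (\<exists>j''<n - 1. \<forall>c\<in>D1. c j'' = 0)"
      using shorten[OF Dv sD j(4) finD j(2)] by auto
    obtain j'' where j'': "j'' < n - 1" "\<forall>c\<in>D1. c j'' = 0" using D1(7) j(1,3) by auto
    obtain D2 where D2: "D2 \<subseteq> vecs (n - 1 - 1)" "V.subspace D2" "nondeg (n - 1 - 1) D2"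
        "V.dim D2 = V.dim D1" "min_dist (n - 1) D1 \<le> min_dist (n - 1 - 1) D2"
      using shorten[OF D1(1-4) j''] by auto
    have nn: "n - 1 - 1 = n - 2" by simp
    have "LCD_code (n - 2) (k - 2) D2"
      unfolding LCD_iff binary_linear_code_def using D2 D1(5) j(5) dC nn by simp
    then have dd: "min_dist (n - 2) D2 \<le> dE2 (n - 2) (k - 2)"
      unfolding dE2_def by (rule SUP_upper[OF CollectI])
    have "min_dist n C \<le> min_dist n ?D" by (rule min_dist_mono) auto
    also have "\<dots> \<le> min_dist (n - 1) D1" by (rule D1(6))
    also have "\<dots> \<le> min_dist (n - 2) D2" using D2(5) unfolding nn .
    also have "\<dots> \<le> dE2 (n - 2) (k - 2)" by (rule dd)
    finally have "min_dist n C \<le> dE2 (n - 2) (k - 2)" .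
    then show ?thesis by (simp add: le_max_iff_disj)
  qed
qed

end
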